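(* Let $\mathds J=[0,\infty)$, $n\ge2$, $1\le k\le n-1$, and consider \[ \begin{bmatrix}\dot x_1(t)\\ \dot x_2(t)\end{bmatrix}=\begin{bmatrix}B_{11}(t) & B_{12}(t)\\ 0 & B_{22}(t)\end{bmatrix}\begin{bmatrix}x_1(t)\\ x_2(t)\end{bmatrix}, \] where $B_{11}(t)$, $B_{12}(t)$, $B_{22}(t)$ are continuous, uniformly bounded matrix functions on $\mathds J$ of dimensions $(n-k)\times(n-k)$, $(n-k)\times k$, $k\times k$. Assume that $\dot x_1(t)=B_{11}(t)x_1(t)$ has an exponential dichotomy on $\mathds J$ with projection $P_1=0$, and $\dot x_2(t)=B_{22}(t)x_2(t)$ has an exponential dichotomy on $\mathds J$ with projection $P_2=I_k$. Then the full system $\dot x(t)=B(t)x(t)$ has an exponential dichotomy on $\mathds J$ with projection $P=\begin{bmatrix}0&0\\0&I_k\end{bmatrix}$. Moreover, it is reducible to block diagonal form with dimension $k$ in such a way that the resulting block diagonal coefficient matrix $D(t)=\mathrm{diag}(D_1(t),D_2(t))$ ($D_2(t)$ of size $k\times k$) satisfies $D_1(t)=B_{11}(t)$.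
   Context: Exponential dichotomy of $\dot x=A(t)x$ on $\mathds J$ with projection $P$ ($P^2=P$): there exist $K\ge1$, $\alpha>0$ and a nonsingular fundamental matrix solution $X(t)$ of $\dot X=AX$ with $\|X(t)PX^{-1}(t_0)\|\le Ke^{-\alpha(t-t_0)}$ for $t\ge t_0\ge0$ and $\|X(t)(I-P)X^{-1}(t_0)\|\le Ke^{\alpha(t-t_0)}$ for $0\le t\le t_0$. A Lyapunov transformation is a smooth invertible change of coordinates $x(t)=S(t)z(t)$ with $S(t)$, $S^{-1}(t)$ and $\dot S(t)$ uniformly bounded on $\mathds J$; it transforms $\dot x=A(t)x$ into $\dot z=[S^{-1}(t)A(t)S(t)-S^{-1}(t)\dot S(t)]z$. The system $\dot x=A(t)x$ is reducible to block diagonal form with dimension $k$ if there is a Lyapunov transformation $x=S(t)z$ transforming it into $\dot z=D(t)z$ with $D(t)=\begin{bmatrix}D_1(t)&0\\0&D_2(t)\end{bmatrix}$, $D_2(t)$ a $k\times k$ matrix. *)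

theory Defs
  imports "HOL-Analysis.Analysis"
begin

text \<open>Time interval J = [0,infinity) is {0..}. Square matrices of dimension m are
  real^'n^'n with CARD('n) = m.\<close>

definition exp_dichotomy :: "(real \<Rightarrow> real^'n^'n) \<Rightarrow> real^'n^'n \<Rightarrow> bool" where
  "exp_dichotomy A P \<longleftrightarrow> P ** P = P \<and>
     (\<exists>K \<alpha> X. K \<ge> 1 \<and> \<alpha> > 0 \<and>
        (\<forall>t\<ge>0. (X has_vector_derivative (A t ** X t)) (at t within {0..}) \<and> invertible (X t)) \<and>
        (\<forall>t t0. 0 \<le> t0 \<and> t0 \<le> t \<longrightarrow>
            norm (X t ** P ** matrix_inv (X t0)) \<le> K * exp (- \<alpha> * (t - t0))) \<and>
        (\<forall>t t0. 0 \<le> t \<and> t \<le> t0 \<longrightarrow>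
            norm (X t ** (mat 1 - P) ** matrix_inv (X t0)) \<le> K * exp (\<alpha> * (t - t0))))"

definition lyapunov_transformation :: "(real \<Rightarrow> real^'n^'n) \<Rightarrow> (real \<Rightarrow> real^'n^'n) \<Rightarrow> bool" where
  "lyapunov_transformation S S' \<longleftrightarrow>
     (\<forall>t\<ge>0. (S has_vector_derivative S' t) (at t within {0..}) \<and> invertible (S t)) \<and>
     continuous_on {0..} S' \<and>
     bounded (S ` {0..}) \<and> bounded ((\<lambda>t. matrix_inv (S t)) ` {0..}) \<and> bounded (S' ` {0..})"

definition transformed_coeff ::
  "(real \<Rightarrow> real^'n^'n) \<Rightarrow> (real \<Rightarrow> real^'n^'n) \<Rightarrow> (real \<Rightarrow> real^'n^'n) \<Rightarrow> real \<Rightarrow> real^'n^'n" where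
  "transformed_coeff A S S' t = matrix_inv (S t) ** A t ** S t - matrix_inv (S t) ** S' t"

definition block_mat :: "real^'a^'a \<Rightarrow> real^'b^'a \<Rightarrow> real^'b^'b \<Rightarrow> real^('a + 'b)^('a + 'b)" where
  "block_mat M11 M12 M22 = (\<chi> i j. case i of
       Inl p \<Rightarrow> (case j of Inl q \<Rightarrow> M11 $ p $ q | Inr q \<Rightarrow> M12 $ p $ q)
     | Inr p \<Rightarrow> (case j of Inl q \<Rightarrow> 0 | Inr q \<Rightarrow> M22 $ p $ q))"

end

theory Submission
  imports Defs
begin


lemma mm_norm_le:
  fixes A :: "real^'n^'m" and B :: "real^'k^'n"
  shows "norm (A ** B) \<le> norm A * norm B"
proof -
  have n0: "(norm (M::real^'q^'p))\<^sup>2 = (\<Sum>i\<in>UNIV. \<Sum>j\<in>UNIV. (M $ i $ j)\<^sup>2)" for M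
    unfolding power2_norm_eq_inner by (simp add: inner_vec_def power2_eq_square)
  have e: "(A ** B) $ i $ j = inner (A $ i) (column j B)" for i j
    by (simp add: matrix_matrix_mult_def inner_vec_def column_def)
  have nsq: "(norm (M::real^'q^'p))\<^sup>2 = (\<Sum>i\<in>UNIV. (norm (M $ i))\<^sup>2)" for M
    by (simp add: power2_norm_eq_inner inner_vec_def)
  have nsq2: "(norm (M::real^'q^'p))\<^sup>2 = (\<Sum>j\<in>UNIV. (norm (column j M))\<^sup>2)" for M
  proof -
    have "(norm M)\<^sup>2 = (\<Sum>i\<in>UNIV. \<Sum>j\<in>UNIV. (M $ i $ j)\<^sup>2)"
      by (rule n0)
    also have "\<dots> = (\<Sum>j\<in>UNIV. \<Sum>i\<in>UNIV. (M $ i $ j)\<^sup>2)" by (rule sum.swap)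
    also have "\<dots> = (\<Sum>j\<in>UNIV. (norm (column j M))\<^sup>2)"
      unfolding power2_norm_eq_inner by (simp add: inner_vec_def power2_eq_square column_def)
    finally show ?thesis .
  qed
  have "(norm (A ** B))\<^sup>2 = (\<Sum>i\<in>UNIV. \<Sum>j\<in>UNIV. ((A ** B) $ i $ j)\<^sup>2)"
    by (rule n0)
  also have "\<dots> \<le> (\<Sum>i\<in>UNIV. \<Sum>j\<in>UNIV. (norm (A $ i))\<^sup>2 * (norm (column j B))\<^sup>2)"
  proof (intro sum_mono)
    fix i j
    have "\<bar>inner (A $ i) (column j B)\<bar> \<le> norm (A $ i) * norm (column j B)"
      by (rule Cauchy_Schwarz_ineq2)
    then have "(inner (A $ i) (column j B))\<^sup>2 \<le> (norm (A $ i) * norm (column j B))\<^sup>2"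
      by (metis abs_ge_zero order_trans power_mono real_sqrt_abs real_sqrt_pow2_iff abs_le_D1 power2_abs)
    then show "((A ** B) $ i $ j)\<^sup>2 \<le> (norm (A $ i))\<^sup>2 * (norm (column j B))\<^sup>2"
      by (simp add: e power_mult_distrib)
  qed
  also have "\<dots> = (norm A)\<^sup>2 * (norm B)\<^sup>2"
    unfolding nsq[of A] nsq2[of B] sum_product ..
  also have "\<dots> = (norm A * norm B)\<^sup>2" by (simp add: power_mult_distrib)
  finally show ?thesis
    by (meson norm_ge_zero power2_le_imp_le zero_le_mult_iff)
qed

lemma mm_bb: "bounded_bilinear ((**) :: real^'n^'m \<Rightarrow> real^'k^'n \<Rightarrow> real^'k^'m)"
proof
  fix a a' :: "real^'n^'m" and b b' :: "real^'k^'n" and r :: real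
  show "(a + a') ** b = a ** b + a' ** b"
    by (vector matrix_matrix_mult_def sum.distrib[symmetric] field_simps)
  show "a ** (b + b') = a ** b + a ** b'" by (rule matrix_add_ldistrib)
  show "(r *\<^sub>R a) ** b = r *\<^sub>R (a ** b)"
    by (vector matrix_matrix_mult_def sum_distrib_left field_simps)
  show "a ** (r *\<^sub>R b) = r *\<^sub>R (a ** b)"
    by (vector matrix_matrix_mult_def sum_distrib_left field_simps)
  show "\<exists>K. \<forall>a b. norm (a ** b :: real^'k^'m) \<le> norm (a::real^'n^'m) * norm (b::real^'k^'n) * K"
    by (rule exI[of _ 1]) (simp add: mm_norm_le)
qed

lemmas mm_diff_left = bounded_bilinear.diff_left[OF mm_bb]
lemmas mm_diff_right = bounded_bilinear.diff_right[OF mm_bb]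
lemmas mm_add_left = bounded_bilinear.add_left[OF mm_bb]
lemmas mm_add_right = bounded_bilinear.add_right[OF mm_bb]
lemmas mm_minus_left = bounded_bilinear.minus_left[OF mm_bb]
lemmas mm_minus_right = bounded_bilinear.minus_right[OF mm_bb]

lemma inv_eq:
  fixes A B :: "real^'n^'n"
  assumes "A ** B = mat 1"
  shows "invertible A" "matrix_inv A = B"
proof -
  have BA: "B ** A = mat 1" using assms matrix_left_right_inverse by blast
  show inv: "invertible A" using assms BA invertible_def by blast
  have "A ** matrix_inv A = mat 1 \<and> matrix_inv A ** A = mat 1"
    unfolding matrix_inv_def by (rule someI[of _ B]) (simp add: assms BA)
  then show "matrix_inv A = B"
    by (metis BA matrix_mul_assoc matrix_mul_lid matrix_mul_rid)
qed

lemma inv_props: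
  fixes A :: "real^'n^'n"
  assumes "invertible A"
  shows "A ** matrix_inv A = mat 1" "matrix_inv A ** A = mat 1"
proof -
  obtain B where "A ** B = mat 1" "B ** A = mat 1" using assms invertible_def by blast
  then show "A ** matrix_inv A = mat 1" "matrix_inv A ** A = mat 1"
    using inv_eq by auto
qed


lemmas mm_scaleR_left = bounded_bilinear.scaleR_left[OF mm_bb]
lemmas mm_scaleR_right = bounded_bilinear.scaleR_right[OF mm_bb]

lemma mm_norm_le3:
  fixes A :: "real^'n^'m" and B :: "real^'k^'n" and C :: "real^'l^'k"
  shows "norm (A ** B ** C) \<le> norm A * norm B * norm C"
  by (meson mm_norm_le mult_right_mono norm_ge_zero order_trans)

lemma inv_cont:
  fixes X :: "real \<Rightarrow> real^'n^'n"
  assumes c: "(X \<longlongrightarrow> X t) (at t within S)" and inv: "\<forall>s\<in>S. invertible (X s)" and t: "t \<in> S"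
  shows "((\<lambda>s. matrix_inv (X s)) \<longlongrightarrow> matrix_inv (X t)) (at t within S)"
proof -
  define Y where "Y s = matrix_inv (X s)" for s
  define c where "c = norm (Y t)"
  have key: "Y s - Y t = - (Y s ** (X s - X t) ** Y t)" if "s \<in> S" for s
  proof -
    have "Y s ** (X s - X t) ** Y t = Y s ** X s ** Y t - Y s ** (X t ** Y t)"
      by (simp add: mm_diff_left mm_diff_right matrix_mul_assoc)
    also have "\<dots> = Y t - Y s"
      using inv_props[of "X s"] inv_props[of "X t"] inv that t by (simp add: Y_def)
    finally show ?thesis by simp
  qed
  have n0: "((\<lambda>s. norm (X s - X t)) \<longlongrightarrow> 0) (at t within S)"
    using tendsto_norm_zero[OF LIM_zero[OF c]] .
  then have ev: "\<forall>\<^sub>F s in at t within S. norm (X s - X t) < 1 / (2 * (c + 1))"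
    by (rule order_tendstoD) (simp add: c_def add_pos_nonneg, smt (verit) norm_ge_zero)
  have "\<forall>\<^sub>F s in at t within S. norm (Y s - Y t) \<le> 2 * c * c * norm (X s - X t)"
  proof -
    have "\<forall>\<^sub>F s in at t within S. s \<in> S" by (simp add: eventually_at_filter)
    with ev show ?thesis
    proof eventually_elim
      case (elim s)
      have c0: "c \<ge> 0" by (simp add: c_def)
      have "norm (Y s - Y t) \<le> norm (Y s) * norm (X s - X t) * c"
        using key[OF elim(2)] by (simp add: c_def mm_norm_le3)
      also have "\<dots> \<le> norm (Y s) * (1 / (2 * (c + 1))) * c"
        using elim(1) c0 by (intro mult_right_mono mult_left_mono) auto
      finally have a: "norm (Y s - Y t) \<le> norm (Y s) * (c / (2 * (c + 1)))" by simp
      have "c / (2 * (c + 1)) \<le> 1/2" using c0 by (simp add: field_simps)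
      then have "norm (Y s) * (c / (2 * (c + 1))) \<le> norm (Y s) * (1/2)"
        by (intro mult_left_mono) auto
      with a have "norm (Y s - Y t) \<le> norm (Y s) / 2" by linarith
      then have "norm (Y s) \<le> 2 * c"
        using norm_triangle_ineq2[of "Y s" "Y t"] by (simp add: c_def)
      have "norm (Y s - Y t) \<le> norm (Y s) * norm (X s - X t) * c"
        using key[OF elim(2)] by (simp add: c_def mm_norm_le3)
      also have "\<dots> \<le> (2 * c) * norm (X s - X t) * c"
        using \<open>norm (Y s) \<le> 2 * c\<close> c0 by (intro mult_right_mono) auto
      finally show ?case by (simp add: algebra_simps)
    qed
  qed
  moreover have "((\<lambda>s. 2 * c * c * norm (X s - X t)) \<longlongrightarrow> 0) (at t within S)"
    using tendsto_mult_right_zero[OF n0] by simp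
  ultimately have "((\<lambda>s. Y s - Y t) \<longlongrightarrow> 0) (at t within S)"
    by (rule Lim_null_comparison)
  then show ?thesis unfolding Y_def by (simp add: LIM_zero_iff)
qed


lemma inv_deriv:
  fixes X :: "real \<Rightarrow> real^'n^'n"
  assumes d: "(X has_vector_derivative X') (at t within S)" and inv: "\<forall>s\<in>S. invertible (X s)" and t: "t \<in> S"
  shows "((\<lambda>s. matrix_inv (X s)) has_vector_derivative
           (- (matrix_inv (X t) ** X' ** matrix_inv (X t)))) (at t within S)"
proof -
  define Y where "Y s = matrix_inv (X s)" for s
  define Y' where "Y' = - (Y t ** X' ** Y t)"
  have c: "(X \<longlongrightarrow> X t) (at t within S)"
    using has_vector_derivative_continuous[OF d] by (simp add: continuous_within)
  have Yc: "(Y \<longlongrightarrow> Y t) (at t within S)"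
    using inv_cont[OF c inv t] unfolding Y_def[abs_def] .
  define Q where "Q s = (1 / norm (s - t)) *\<^sub>R (X s - (X t + (s - t) *\<^sub>R X'))" for s
  have Q0: "(Q \<longlongrightarrow> 0) (at t within S)"
    using d unfolding has_vector_derivative_def has_derivative_within Q_def by simp
  have ident: "Y s - (Y t + (s - t) *\<^sub>R Y') =
      - (Y s ** (X s - (X t + (s - t) *\<^sub>R X')) ** Y t) - (s - t) *\<^sub>R ((Y s - Y t) ** X' ** Y t)"
    if "s \<in> S" for s
  proof -
    have i1: "Y s ** X s = mat 1" using inv_props[of "X s"] inv that by (simp add: Y_def)
    have i2: "X t ** Y t = mat 1" using inv_props[of "X t"] inv t by (simp add: Y_def)
    have "Y s ** (X s - (X t + (s - t) *\<^sub>R X')) ** Y t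
        = (Y s ** X s) ** Y t - Y s ** (X t ** Y t) - (s - t) *\<^sub>R (Y s ** X' ** Y t)"
      by (simp add: mm_diff_left mm_diff_right mm_add_left mm_add_right mm_scaleR_left
          mm_scaleR_right matrix_mul_assoc)
    also have "\<dots> = Y t - Y s - (s - t) *\<^sub>R (Y s ** X' ** Y t)" by (simp add: i1 i2)
    finally have e: "Y s ** (X s - (X t + (s - t) *\<^sub>R X')) ** Y t
        = Y t - Y s - (s - t) *\<^sub>R (Y s ** X' ** Y t)" .
    show ?thesis unfolding e Y'_def
      by (simp add: mm_diff_left mm_diff_right scaleR_diff_right algebra_simps)
  qed
  have bound: "\<forall>\<^sub>F s in at t within S.
      norm ((1 / norm (s - t)) *\<^sub>R (Y s - (Y t + (s - t) *\<^sub>R Y')))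
      \<le> norm (Y s) * norm (Q s) * norm (Y t) + norm (Y s - Y t) * norm X' * norm (Y t)"
  proof -
    have "\<forall>\<^sub>F s in at t within S. s \<in> S" by (simp add: eventually_at_filter)
    then show ?thesis
    proof eventually_elim
      case (elim s)
      have "(1 / norm (s - t)) *\<^sub>R (Y s - (Y t + (s - t) *\<^sub>R Y'))
          = - (Y s ** Q s ** Y t) - ((s - t) / norm (s - t)) *\<^sub>R ((Y s - Y t) ** X' ** Y t)"
      proof -
        have "Y s ** Q s ** Y t = (1 / norm (s - t)) *\<^sub>R (Y s ** (X s - (X t + (s - t) *\<^sub>R X')) ** Y t)"
          unfolding Q_def by (simp only: mm_scaleR_left mm_scaleR_right)
        then show ?thesis unfolding ident[OF elim]
          by (simp add: scaleR_diff_right)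
      qed
      also have "norm \<dots> \<le> norm (Y s ** Q s ** Y t) + norm (((s - t) / norm (s - t)) *\<^sub>R ((Y s - Y t) ** X' ** Y t))"
        by (rule norm_triangle_ineq4[THEN order_trans]) simp
      also have "\<dots> \<le> norm (Y s) * norm (Q s) * norm (Y t) + norm (Y s - Y t) * norm X' * norm (Y t)"
      proof (rule add_mono)
        show "norm (Y s ** Q s ** Y t) \<le> norm (Y s) * norm (Q s) * norm (Y t)" by (rule mm_norm_le3)
        have "\<bar>(s - t) / norm (s - t)\<bar> \<le> 1" by (simp add: divide_le_eq_1)
        then have "norm (((s - t) / norm (s - t)) *\<^sub>R ((Y s - Y t) ** X' ** Y t))
            \<le> 1 * norm ((Y s - Y t) ** X' ** Y t)"
          by (simp only: norm_scaleR) (intro mult_right_mono, auto)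
        also have "\<dots> \<le> norm (Y s - Y t) * norm X' * norm (Y t)" using mm_norm_le3 by simp
        finally show "norm (((s - t) / norm (s - t)) *\<^sub>R ((Y s - Y t) ** X' ** Y t))
            \<le> norm (Y s - Y t) * norm X' * norm (Y t)" .
      qed
      finally show ?case .
    qed
  qed
  have lim: "((\<lambda>s. norm (Y s) * norm (Q s) * norm (Y t) + norm (Y s - Y t) * norm X' * norm (Y t))
      \<longlongrightarrow> norm (Y t) * norm (0::real^'n^'n) * norm (Y t) + norm (Y t - Y t) * norm X' * norm (Y t))
      (at t within S)"
    by (intro tendsto_intros Yc Q0)
  have "((\<lambda>s. (1 / norm (s - t)) *\<^sub>R (Y s - (Y t + (s - t) *\<^sub>R Y'))) \<longlongrightarrow> 0) (at t within S)"
    by (rule Lim_null_comparison[OF bound]) (use lim in simp)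
  then show ?thesis
    unfolding has_vector_derivative_def has_derivative_within Y_def[symmetric] Y'_def[symmetric]
    by (simp add: bounded_linear_scaleR_left)
qed


lemma sum_UNIV_plus: "(\<Sum>x\<in>(UNIV::('a::finite + 'b::finite) set). f x) =
    (\<Sum>a\<in>UNIV. f (Inl a)) + (\<Sum>b\<in>UNIV. f (Inr b))"
  by (subst UNIV_Plus_UNIV[symmetric], subst sum.Plus) (simp_all add: comp_def)

lemma block_nth:
  "block_mat A B C $ Inl p $ Inl q = A $ p $ q"
  "block_mat A B C $ Inl p $ Inr q' = B $ p $ q'"
  "block_mat A B C $ Inr p' $ Inl q = 0"
  "block_mat A B C $ Inr p' $ Inr q' = C $ p' $ q'"
  by (simp_all add: block_mat_def)

lemma block_eq_iff:
  "block_mat A B C = block_mat A' B' C' \<longleftrightarrow> A = A' \<and> B = B' \<and> C = C'"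
proof
  assume h: "block_mat A B C = block_mat A' B' C'"
  have "A $ p $ q = A' $ p $ q" "B $ p $ q' = B' $ p $ q'" "C $ p' $ q' = C' $ p' $ q'" for p q p' q'
    using arg_cong[OF h, of "\<lambda>M. M $ Inl p $ Inl q"] arg_cong[OF h, of "\<lambda>M. M $ Inl p $ Inr q'"]
      arg_cong[OF h, of "\<lambda>M. M $ Inr p' $ Inr q'"] by (simp_all add: block_nth)
  then show "A = A' \<and> B = B' \<and> C = C'" by (simp add: vec_eq_iff)
qed simp

lemma block_mult [simp]:
  fixes A :: "real^'a::finite^'a" and B :: "real^'b::finite^'a" and C :: "real^'b^'b"
  shows "block_mat A B C ** block_mat A' B' C' = block_mat (A ** A') (A ** B' + B ** C') (C ** C')"
  unfolding vec_eq_iff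
proof (intro allI)
  fix i j :: "'a + 'b"
  show "(block_mat A B C ** block_mat A' B' C') $ i $ j = block_mat (A ** A') (A ** B' + B ** C') (C ** C') $ i $ j"
    by (cases i; cases j) (simp_all add: matrix_matrix_mult_def sum_UNIV_plus block_nth)
qed

lemma block_one: "(mat 1 :: real^('a::finite + 'b::finite)^('a + 'b)) = block_mat (mat 1) 0 (mat 1)"
  unfolding vec_eq_iff
proof (intro allI)
  fix i j :: "'a + 'b"
  show "(mat 1 :: real^('a + 'b)^('a + 'b)) $ i $ j = block_mat (mat 1) 0 (mat 1) $ i $ j"
    by (cases i; cases j) (simp_all add: mat_def block_nth)
qed

lemma block_add [simp]: "block_mat A B C + block_mat A' B' C' = block_mat (A + A') (B + B') (C + C')"
  unfolding vec_eq_iff by (auto simp: block_mat_def split: sum.splits)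

lemma block_diff [simp]: "block_mat A B C - block_mat A' B' C' = block_mat (A - A') (B - B') (C - C')"
  unfolding vec_eq_iff by (auto simp: block_mat_def split: sum.splits)

lemma block_minus [simp]: "- block_mat A B C = block_mat (- A) (- B) (- C)"
  unfolding vec_eq_iff by (auto simp: block_mat_def split: sum.splits)

lemma block_scaleR [simp]: "r *\<^sub>R block_mat A B C = block_mat (r *\<^sub>R A) (r *\<^sub>R B) (r *\<^sub>R C)"
  unfolding vec_eq_iff by (auto simp: block_mat_def split: sum.splits)

lemma block_zero [simp]: "block_mat 0 0 0 = 0"
  unfolding vec_eq_iff by (auto simp: block_mat_def split: sum.splits)

lemma block_norm_sq:
  fixes A :: "real^'a::finite^'a" and B :: "real^'b::finite^'a" and C :: "real^'b^'b"
  shows "(norm (block_mat A B C))\<^sup>2 = (norm A)\<^sup>2 + (norm B)\<^sup>2 + (norm C)\<^sup>2"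
proof -
  have n0: "(norm (M::real^'q^'p))\<^sup>2 = (\<Sum>i\<in>UNIV. \<Sum>j\<in>UNIV. (M $ i $ j)\<^sup>2)" for M
    unfolding power2_norm_eq_inner by (simp add: inner_vec_def power2_eq_square)
  show ?thesis unfolding n0 by (simp add: sum_UNIV_plus block_nth sum.distrib)
qed

lemma block_norm_le:
  fixes A :: "real^'a::finite^'a" and B :: "real^'b::finite^'a" and C :: "real^'b^'b"
  shows "norm (block_mat A B C) \<le> norm A + norm B + norm C"
proof -
  have "(norm (block_mat A B C))\<^sup>2 \<le> (norm A + norm B + norm C)\<^sup>2"
  proof -
    have e: "(norm A + norm B + norm C)\<^sup>2 = (norm A)\<^sup>2 + (norm B)\<^sup>2 + (norm C)\<^sup>2
       + 2 * (norm A * norm B) + 2 * (norm A * norm C) + 2 * (norm B * norm C)"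
      by algebra
    have "0 \<le> norm A * norm B" "0 \<le> norm A * norm C" "0 \<le> norm B * norm C" by simp_all
    then show ?thesis unfolding block_norm_sq e by linarith
  qed
  then show ?thesis by (rule power2_le_imp_le) simp
qed

lemma block_norm_ge:
  fixes A :: "real^'a::finite^'a" and B :: "real^'b::finite^'a" and C :: "real^'b^'b"
  shows "norm A \<le> norm (block_mat A B C)" "norm B \<le> norm (block_mat A B C)" "norm C \<le> norm (block_mat A B C)"
proof -
  have "(norm A)\<^sup>2 \<le> (norm (block_mat A B C))\<^sup>2" "(norm B)\<^sup>2 \<le> (norm (block_mat A B C))\<^sup>2"
     "(norm C)\<^sup>2 \<le> (norm (block_mat A B C))\<^sup>2"
    unfolding block_norm_sq using zero_le_power2[of "norm A"] zero_le_power2[of "norm B"]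
      zero_le_power2[of "norm C"] by linarith+
  then show "norm A \<le> norm (block_mat A B C)" "norm B \<le> norm (block_mat A B C)" "norm C \<le> norm (block_mat A B C)"
    by (auto intro: power2_le_imp_le)
qed

lemma block_bl1: "bounded_linear (\<lambda>A::real^'a::finite^'a. block_mat A (0::real^'b::finite^'a) (0::real^'b^'b))"
proof (rule bounded_linear_intro[of _ 1])
  fix x y :: "real^'a^'a" and r :: real
  show "block_mat (x + y) (0::real^'b^'a) (0::real^'b^'b) = block_mat x 0 0 + block_mat y 0 0" by (simp only: block_add add.right_neutral)
  show "block_mat (r *\<^sub>R x) (0::real^'b^'a) (0::real^'b^'b) = r *\<^sub>R block_mat x 0 0" by (simp only: block_scaleR scaleR_zero_right)
  show "norm (block_mat x (0::real^'b^'a) (0::real^'b^'b)) \<le> norm x * 1"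
    using block_norm_le[of x "0::real^'b^'a" "0::real^'b^'b"] by simp
qed


lemma block_bl2: "bounded_linear (\<lambda>B::real^'b::finite^'a::finite. block_mat (0::real^'a^'a) B (0::real^'b^'b))"
proof (rule bounded_linear_intro[of _ 1])
  fix x y :: "real^'b^'a" and r :: real
  show "block_mat (0::real^'a^'a) (x + y) (0::real^'b^'b) = block_mat 0 x 0 + block_mat 0 y 0"
    by (simp only: block_add add.right_neutral)
  show "block_mat (0::real^'a^'a) (r *\<^sub>R x) (0::real^'b^'b) = r *\<^sub>R block_mat 0 x 0"
    by (simp only: block_scaleR scaleR_zero_right)
  show "norm (block_mat (0::real^'a^'a) x (0::real^'b^'b)) \<le> norm x * 1"
    using block_norm_le[of "0::real^'a^'a" x "0::real^'b^'b"] by simp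
qed

lemma block_bl3: "bounded_linear (\<lambda>C::real^'b::finite^'b. block_mat (0::real^'a::finite^'a) (0::real^'b^'a) C)"
proof (rule bounded_linear_intro[of _ 1])
  fix x y :: "real^'b^'b" and r :: real
  show "block_mat (0::real^'a^'a) (0::real^'b^'a) (x + y) = block_mat 0 0 x + block_mat 0 0 y"
    by (simp only: block_add add.right_neutral)
  show "block_mat (0::real^'a^'a) (0::real^'b^'a) (r *\<^sub>R x) = r *\<^sub>R block_mat 0 0 x"
    by (simp only: block_scaleR scaleR_zero_right)
  show "norm (block_mat (0::real^'a^'a) (0::real^'b^'a) x) \<le> norm x * 1"
    using block_norm_le[of "0::real^'a^'a" "0::real^'b^'a" x] by simp
qed

lemma block_split: "block_mat A B C = block_mat A 0 0 + block_mat 0 B 0 + block_mat 0 0 C"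
  by (simp only: block_add add.right_neutral add.left_neutral)

lemma block_deriv:
  fixes A :: "real \<Rightarrow> real^'a::finite^'a" and B :: "real \<Rightarrow> real^'b::finite^'a" and C :: "real \<Rightarrow> real^'b^'b"
  assumes "(A has_vector_derivative A') F" "(B has_vector_derivative B') F" "(C has_vector_derivative C') F"
  shows "((\<lambda>t. block_mat (A t) (B t) (C t)) has_vector_derivative block_mat A' B' C') F"
  apply (subst (2) block_split, subst block_split)
  by (intro has_vector_derivative_add bounded_linear.has_vector_derivative[OF block_bl1]
      bounded_linear.has_vector_derivative[OF block_bl2] bounded_linear.has_vector_derivative[OF block_bl3] assms)

lemma block_cont:
  fixes A :: "real \<Rightarrow> real^'a::finite^'a" and B :: "real \<Rightarrow> real^'b::finite^'a" and C :: "real \<Rightarrow> real^'b^'b"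
  assumes "continuous_on S A" "continuous_on S B" "continuous_on S C"
  shows "continuous_on S (\<lambda>t. block_mat (A t) (B t) (C t))"
  apply (subst block_split)
  by (intro continuous_on_add bounded_linear.continuous_on[OF block_bl1]
      bounded_linear.continuous_on[OF block_bl2] bounded_linear.continuous_on[OF block_bl3] assms)



theorem proposition3:
  fixes B11 :: "real \<Rightarrow> real^'a::finite^'a"
    and B12 :: "real \<Rightarrow> real^'b::finite^'a"
    and B22 :: "real \<Rightarrow> real^'b^'b"
  assumes "continuous_on {0..} B11" and "continuous_on {0..} B12" and "continuous_on {0..} B22"
    and "bounded (B11 ` {0..})" and "bounded (B12 ` {0..})" and "bounded (B22 ` {0..})"
    and "exp_dichotomy B11 0"
    and "exp_dichotomy B22 (mat 1)"
  shows "exp_dichotomy (\<lambda>t. block_mat (B11 t) (B12 t) (B22 t)) (block_mat 0 0 (mat 1))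
     \<and> (\<exists>S S' D2. lyapunov_transformation S S' \<and>
          (\<forall>t\<ge>0. transformed_coeff (\<lambda>t. block_mat (B11 t) (B12 t) (B22 t)) S S' t
                   = block_mat (B11 t) 0 (D2 t)))"
proof -
  note cB11 = assms(1) and cB12 = assms(2) and cB22 = assms(3)
  obtain M11 where M11: "M11 > 0" "\<And>t. t \<ge> 0 \<Longrightarrow> norm (B11 t) \<le> M11"
    using assms(4) unfolding bounded_pos by auto
  obtain M12 where M12: "M12 > 0" "\<And>t. t \<ge> 0 \<Longrightarrow> norm (B12 t) \<le> M12"
    using assms(5) unfolding bounded_pos by auto
  obtain M22 where M22: "M22 > 0" "\<And>t. t \<ge> 0 \<Longrightarrow> norm (B22 t) \<le> M22"
    using assms(6) unfolding bounded_pos by auto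
  obtain K1 \<alpha>1 and X1 :: "real \<Rightarrow> real^'a^'a" where K1: "K1 \<ge> 1" and a1: "\<alpha>1 > 0"
    and X1': "\<forall>t\<ge>0. (X1 has_vector_derivative (B11 t ** X1 t)) (at t within {0..}) \<and> invertible (X1 t)"
    and bd1': "\<forall>t t0. 0 \<le> t \<and> t \<le> t0 \<longrightarrow> norm (X1 t ** matrix_inv (X1 t0)) \<le> K1 * exp (\<alpha>1 * (t - t0))"
    using assms(7) unfolding exp_dichotomy_def by auto
  have X1: "\<And>t. t \<ge> 0 \<Longrightarrow> (X1 has_vector_derivative (B11 t ** X1 t)) (at t within {0..}) \<and> invertible (X1 t)"
    and bd1: "\<And>t t0. 0 \<le> t \<Longrightarrow> t \<le> t0 \<Longrightarrow> norm (X1 t ** matrix_inv (X1 t0)) \<le> K1 * exp (\<alpha>1 * (t - t0))"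
    using X1' bd1' by auto
  obtain K2 \<alpha>2 and X2 :: "real \<Rightarrow> real^'b^'b" where K2: "K2 \<ge> 1" and a2: "\<alpha>2 > 0"
    and X2': "\<forall>t\<ge>0. (X2 has_vector_derivative (B22 t ** X2 t)) (at t within {0..}) \<and> invertible (X2 t)"
    and bd2': "\<forall>t t0. 0 \<le> t0 \<and> t0 \<le> t \<longrightarrow> norm (X2 t ** matrix_inv (X2 t0)) \<le> K2 * exp (- \<alpha>2 * (t - t0))"
    using assms(8) unfolding exp_dichotomy_def by auto
  have X2: "\<And>t. t \<ge> 0 \<Longrightarrow> (X2 has_vector_derivative (B22 t ** X2 t)) (at t within {0..}) \<and> invertible (X2 t)"
    and bd2: "\<And>t t0. 0 \<le> t0 \<Longrightarrow> t0 \<le> t \<Longrightarrow> norm (X2 t ** matrix_inv (X2 t0)) \<le> K2 * exp (- \<alpha>2 * (t - t0))"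
    using X2' bd2' by auto
  define Y1 where "Y1 t = matrix_inv (X1 t)" for t
  define Y2 where "Y2 t = matrix_inv (X2 t)" for t
  have inv1: "\<forall>s\<in>{0..}. invertible (X1 s)" and inv2: "\<forall>s\<in>{0..}. invertible (X2 s)"
    using X1 X2 by auto
  have XY1: "X1 t ** Y1 t = mat 1" "Y1 t ** X1 t = mat 1" if "t \<ge> 0" for t
    using inv_props[of "X1 t"] X1[OF that] by (auto simp: Y1_def)
  have XY2: "X2 t ** Y2 t = mat 1" "Y2 t ** X2 t = mat 1" if "t \<ge> 0" for t
    using inv_props[of "X2 t"] X2[OF that] by (auto simp: Y2_def)
  have dY1: "(Y1 has_vector_derivative - (Y1 t ** B11 t)) (at t within {0..})" if "t \<ge> 0" for t
  proof -
    have "(Y1 has_vector_derivative - (Y1 t ** (B11 t ** X1 t) ** Y1 t)) (at t within {0..})"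
      using inv_deriv[of X1 "B11 t ** X1 t" t "{0..}"] X1[OF that] inv1 that
      unfolding Y1_def[abs_def] by auto
    moreover have "Y1 t ** (B11 t ** X1 t) ** Y1 t = Y1 t ** B11 t"
      by (metis XY1(1)[OF that] matrix_mul_assoc matrix_mul_rid)
    ultimately show ?thesis by simp
  qed
  have dY2: "(Y2 has_vector_derivative - (Y2 t ** B22 t)) (at t within {0..})" if "t \<ge> 0" for t
  proof -
    have "(Y2 has_vector_derivative - (Y2 t ** (B22 t ** X2 t) ** Y2 t)) (at t within {0..})"
      using inv_deriv[of X2 "B22 t ** X2 t" t "{0..}"] X2[OF that] inv2 that
      unfolding Y2_def[abs_def] by auto
    moreover have "Y2 t ** (B22 t ** X2 t) ** Y2 t = Y2 t ** B22 t"
      by (metis XY2(1)[OF that] matrix_mul_assoc matrix_mul_rid)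
    ultimately show ?thesis by simp
  qed
  have cX1: "continuous_on {0..} X1" using X1 by (intro continuous_on_vector_derivative) auto
  have cX2: "continuous_on {0..} X2" using X2 by (intro continuous_on_vector_derivative) auto
  have cY1: "continuous_on {0..} Y1" using dY1 by (intro continuous_on_vector_derivative) auto
  have cY2: "continuous_on {0..} Y2" using dY2 by (intro continuous_on_vector_derivative) auto
  define G where "G s = Y1 s ** B12 s ** X2 s" for s
  have cG: "continuous_on {0..} G"
    unfolding G_def by (intro bounded_bilinear.continuous_on[OF mm_bb] cY1 cB12 cX2)
  define c where "c = \<alpha>1 + \<alpha>2"
  have c0: "c > 0" using a1 a2 by (simp add: c_def)
  have estG: "norm (X1 t ** G s ** Y2 t) \<le> K1 * K2 * M12 * exp (c * t) * exp (- c * s)"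
    if "0 \<le> t" "t \<le> s" for t s
  proof -
    have "X1 t ** G s ** Y2 t = (X1 t ** Y1 s) ** B12 s ** (X2 s ** Y2 t)"
      by (simp add: G_def matrix_mul_assoc)
    also have "norm \<dots> \<le> norm (X1 t ** Y1 s) * norm (B12 s) * norm (X2 s ** Y2 t)"
      by (rule mm_norm_le3)
    also have "\<dots> \<le> (K1 * exp (\<alpha>1 * (t - s))) * M12 * (K2 * exp (- \<alpha>2 * (s - t)))"
      using bd1[OF that] bd2[OF that(1) that(2)] M12 that K1
      by (intro mult_mono) (auto simp: Y1_def Y2_def)
    also have "\<dots> = K1 * K2 * M12 * exp (c * t) * exp (- c * s)"
      by (simp add: c_def mult_exp_exp algebra_simps)
    finally show ?thesis .
  qed
  define C0 where "C0 = norm (Y1 0) * (K1 * K2 * M12) * norm (X2 0)"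
  have normG: "norm (G s) \<le> C0 * exp (- c * s)" if "s \<ge> 0" for s
  proof -
    have "G s = Y1 0 ** (X1 0 ** G s ** Y2 0) ** X2 0"
      using XY1[of 0] XY2[of 0] by (simp add: matrix_mul_assoc) (metis matrix_mul_assoc matrix_mul_rid)
    also have "norm \<dots> \<le> norm (Y1 0) * norm (X1 0 ** G s ** Y2 0) * norm (X2 0)"
      by (rule mm_norm_le3)
    also have "\<dots> \<le> norm (Y1 0) * (K1 * K2 * M12 * exp (c * 0) * exp (- c * s)) * norm (X2 0)"
      using estG[of 0 s] that K1 K2 M12 by (intro mult_mono) auto
    finally show ?thesis by (simp add: C0_def mult_ac)
  qed
  have intG: "G integrable_on {t..}" if "t \<ge> 0" for t
  proof (rule integrable_on_all_intervals_integrable_bound[where g = "\<lambda>s. C0 * exp (- c * s)"])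
    fix a b :: real
    have "G integrable_on {max t a..b}"
      by (rule integrable_continuous_interval, rule continuous_on_subset[OF cG]) (use that in auto)
    moreover have "{t..} \<inter> cbox a b = {max t a..b}" by auto
    ultimately show "(\<lambda>x. if x \<in> {t..} then G x else 0) integrable_on cbox a b"
      unfolding integrable_restrict_Int by simp
  next
    fix x assume "x \<in> {t..}" then show "norm (G x) \<le> C0 * exp (- c * x)" using normG that by auto
  next
    show "(\<lambda>s. C0 * exp (- c * s)) integrable_on {t..}"
      using integrable_on_cmult_left[OF integrable_on_exp_minus_to_infinity[OF c0], of C0 t] by simp
  qed
  define J where "J t = integral {t..} G" for t
  define L where "L = J 0"
  have Jsplit: "J t = L - integral {0..t} G" if "t \<ge> 0" for t
  proof -
    have "(G has_integral (integral {0..t} G + J t)) ({0..t} \<union> {t..})"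
      apply (rule has_integral_Un)
      using intG[OF that] integrable_continuous_interval[OF continuous_on_subset[OF cG]] that
      by (auto simp: J_def negligible_insert)
    moreover have "{0..t} \<union> {t..} = {0::real..}" using that by auto
    ultimately have "integral {0..} G = integral {0..t} G + J t" by (simp add: integral_unique)
    then show ?thesis by (simp add: L_def J_def)
  qed
  have dJ: "(J has_vector_derivative - G t) (at t within {0..})" if "t \<ge> 0" for t
  proof -
    have "((\<lambda>u. integral {0..u} G) has_vector_derivative G t) (at t within {0..t+1})"
      by (rule integral_has_vector_derivative) (use that in \<open>auto intro: continuous_on_subset[OF cG]\<close>)
    moreover have "at t within {0..t+1} = at t within {0..}"
      by (rule at_within_nhd[where S="{t - 1 <..< t + 1}"]) auto
    ultimately have "((\<lambda>u. integral {0..u} G) has_vector_derivative G t) (at t within {0..})" by simp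
    then have "((\<lambda>u. L - integral {0..u} G) has_vector_derivative - G t) (at t within {0..})"
      by (intro derivative_eq_intros) auto
    then show ?thesis
      by (rule has_vector_derivative_transform[rotated 2]) (use that Jsplit in auto)
  qed
  define H where "H t = - (X1 t ** J t ** Y2 t)" for t
  define H' where "H' t = B11 t ** H t + B12 t - H t ** B22 t" for t
  have dH: "(H has_vector_derivative H' t) (at t within {0..})" if "t \<ge> 0" for t
  proof -
    have d1: "((\<lambda>t. X1 t ** J t) has_vector_derivative (X1 t ** (- G t) + (B11 t ** X1 t) ** J t)) (at t within {0..})"
      by (rule bounded_bilinear.has_vector_derivative[OF mm_bb]) (use X1[OF that] dJ[OF that] in auto)
    have d2: "((\<lambda>t. X1 t ** J t ** Y2 t) has_vector_derivative
        (X1 t ** J t ** (- (Y2 t ** B22 t)) + (X1 t ** (- G t) + (B11 t ** X1 t) ** J t) ** Y2 t)) (at t within {0..})"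
      by (rule bounded_bilinear.has_vector_derivative[OF mm_bb, OF d1 dY2[OF that]])
    have eqG: "X1 t ** G t ** Y2 t = B12 t"
    proof -
      have "X1 t ** G t ** Y2 t = (X1 t ** Y1 t) ** B12 t ** (X2 t ** Y2 t)"
        by (simp add: G_def matrix_mul_assoc)
      then show ?thesis using XY1[OF that] XY2[OF that] by simp
    qed
    have "- (X1 t ** J t ** (- (Y2 t ** B22 t)) + (X1 t ** (- G t) + (B11 t ** X1 t) ** J t) ** Y2 t) = H' t"
      unfolding H'_def H_def
      by (simp add: mm_minus_left mm_minus_right mm_add_left mm_add_right mm_diff_left mm_diff_right
          matrix_mul_assoc eqG)
    with has_vector_derivative_minus[OF d2] show ?thesis unfolding H_def[abs_def] by simp
  qed
  have cH: "continuous_on {0..} H" using dH by (intro continuous_on_vector_derivative) auto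
  have cH': "continuous_on {0..} H'"
    unfolding H'_def[abs_def]
    by (intro continuous_on_add continuous_on_diff bounded_bilinear.continuous_on[OF mm_bb] cH cB11 cB12 cB22)
  define Hb where "Hb = K1 * K2 * M12 / c"
  have Hb0: "Hb \<ge> 0" using K1 K2 M12 c0 by (simp add: Hb_def)
  have Hbound: "norm (H t) \<le> Hb" if "t \<ge> 0" for t
  proof -
    have bl: "bounded_linear (\<lambda>M. X1 t ** M ** Y2 t)"
      by (rule bounded_linear_compose[OF bounded_bilinear.bounded_linear_left[OF mm_bb]
            bounded_bilinear.bounded_linear_right[OF mm_bb]])
    have eq: "X1 t ** J t ** Y2 t = integral {t..} (\<lambda>s. X1 t ** G s ** Y2 t)"
      using integral_linear[OF intG[OF that] bl] by (simp add: J_def comp_def)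
    have int1: "(\<lambda>s. X1 t ** G s ** Y2 t) integrable_on {t..}"
      using integrable_linear[OF intG[OF that] bl] by (simp add: comp_def)
    have hi: "((\<lambda>s. (K1 * K2 * M12 * exp (c * t)) * exp (- c * s)) has_integral
        (K1 * K2 * M12 * exp (c * t)) * (exp (- c * t) / c)) {t..}"
      by (rule has_integral_mult_right[OF has_integral_exp_minus_to_infinity[OF c0]])
    have "norm (X1 t ** J t ** Y2 t) \<le> integral {t..} (\<lambda>s. (K1 * K2 * M12 * exp (c * t)) * exp (- c * s))"
      unfolding eq
      by (rule integral_norm_bound_integral[OF int1]) (use hi estG that in \<open>auto simp: mult.assoc\<close>)
    also have "\<dots> = (K1 * K2 * M12 * exp (c * t)) * (exp (- c * t) / c)"
      using hi by (rule integral_unique)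
    also have "\<dots> = Hb"
      by (simp add: Hb_def mult_exp_exp[symmetric] exp_minus_inverse)
    finally show ?thesis by (simp add: H_def)
  qed
  define S where "S t = block_mat (mat 1) (H t) (mat 1)" for t
  define S' where "S' t = block_mat 0 (H' t) (0::real^'b^'b)" for t
  define Si where "Si t = block_mat (mat 1) (- H t) (mat 1)" for t
  have SSi: "S t ** Si t = mat 1" for t
    by (simp add: S_def Si_def block_one mm_minus_right)
  have invS: "invertible (S t)" and miS: "matrix_inv (S t) = Si t" for t
    using inv_eq[OF SSi] by auto
  have nI: "norm (block_mat (mat 1) (M::real^'b^'a) (mat 1)) \<le> norm (mat 1 :: real^'a^'a) + norm M + norm (mat 1 :: real^'b^'b)" for M
    by (rule block_norm_le)
  have lyap: "lyapunov_transformation S S'"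
    unfolding lyapunov_transformation_def
  proof (intro conjI allI impI)
    fix t :: real assume t: "t \<ge> 0"
    show "(S has_vector_derivative S' t) (at t within {0..})"
      unfolding S_def[abs_def] S'_def by (intro block_deriv derivative_intros dH t)
    show "invertible (S t)" by (rule invS)
  next
    show "continuous_on {0..} S'"
      unfolding S'_def[abs_def] by (intro block_cont continuous_on_const cH')
  next
    show "bounded (S ` {0..})" unfolding bounded_iff
      by (rule exI[of _ "norm (mat 1 :: real^'a^'a) + Hb + norm (mat 1 :: real^'b^'b)"])
         (auto simp: S_def intro!: order_trans[OF nI] Hbound)
  next
    show "bounded ((\<lambda>t. matrix_inv (S t)) ` {0..})" unfolding bounded_iff miS
      by (rule exI[of _ "norm (mat 1 :: real^'a^'a) + Hb + norm (mat 1 :: real^'b^'b)"])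
         (auto simp: Si_def intro!: order_trans[OF nI] Hbound)
  next
    have "norm (S' t) \<le> M11 * Hb + M12 + Hb * M22" if "t \<ge> 0" for t
    proof -
      have "norm (S' t) \<le> norm (0::real^'a^'a) + norm (H' t) + norm (0::real^'b^'b)"
        unfolding S'_def by (rule block_norm_le)
      also have "\<dots> = norm (B11 t ** H t + B12 t - H t ** B22 t)" by (simp add: H'_def)
      also have "\<dots> \<le> norm (B11 t ** H t) + norm (B12 t) + norm (H t ** B22 t)"
        by (smt (verit) norm_triangle_ineq norm_triangle_ineq4)
      also have "\<dots> \<le> M11 * Hb + M12 + Hb * M22"
      proof -
        have "norm (B11 t ** H t) \<le> M11 * Hb"
          using mm_norm_le[of "B11 t" "H t"] M11(2)[OF that] Hbound[OF that]
          by (meson mult_mono norm_ge_zero order_trans M11(1) less_imp_le)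
        moreover have "norm (H t ** B22 t) \<le> Hb * M22"
          using mm_norm_le[of "H t" "B22 t"] M22(2)[OF that] Hbound[OF that] Hb0
          by (meson mult_mono norm_ge_zero order_trans)
        ultimately show ?thesis using M12(2)[OF that] by linarith
      qed
      finally show ?thesis .
    qed
    then show "bounded (S' ` {0..})" unfolding bounded_iff by auto
  qed
  have tc: "\<forall>t\<ge>0. transformed_coeff (\<lambda>t. block_mat (B11 t) (B12 t) (B22 t)) S S' t
                   = block_mat (B11 t) 0 (B22 t)"
    unfolding transformed_coeff_def miS
    by (simp add: S_def Si_def S'_def H'_def block_eq_iff mm_minus_left mm_minus_right mm_add_left
        mm_add_right mm_diff_left mm_diff_right)
  define Xf where "Xf t = block_mat (X1 t) (H t ** X2 t) (X2 t)" for t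
  define Xi where "Xi t = block_mat (Y1 t) (- (Y1 t ** H t)) (Y2 t)" for t
  define P where "P = block_mat (0::real^'a^'a) (0::real^'b^'a) (mat 1::real^'b^'b)"
  have HXY: "H t ** X2 t ** Y2 t = H t" if "t \<ge> 0" for t
    by (metis XY2(1)[OF that] matrix_mul_assoc matrix_mul_rid)
  have XXi: "Xf t ** Xi t = mat 1" if "t \<ge> 0" for t
    by (simp add: Xf_def Xi_def block_one mm_minus_right matrix_mul_assoc XY1[OF that] XY2[OF that] HXY[OF that])
  have invXf: "invertible (Xf t)" and miXf: "matrix_inv (Xf t) = Xi t" if "t \<ge> 0" for t
    using inv_eq[OF XXi[OF that]] by auto
  define \<alpha> where "\<alpha> = min \<alpha>1 \<alpha>2"
  define K where "K = (1 + Hb) * max K1 K2"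
  have dich: "exp_dichotomy (\<lambda>t. block_mat (B11 t) (B12 t) (B22 t)) P"
    unfolding exp_dichotomy_def
  proof (rule conjI, simp add: P_def, rule exI[of _ K], rule exI[of _ \<alpha>], rule exI[of _ Xf], intro conjI allI impI)
    show "1 \<le> K" unfolding K_def using Hb0 K1
      by (smt (verit) max.cobounded1 mult_le_cancel_right1 mult_nonneg_nonneg)
    show "0 < \<alpha>" using a1 a2 by (simp add: \<alpha>_def)
  next
    fix t :: real assume t: "t \<ge> 0"
    show "invertible (Xf t)" by (rule invXf[OF t])
    have d: "(Xf has_vector_derivative block_mat (B11 t ** X1 t) (H t ** (B22 t ** X2 t) + H' t ** X2 t) (B22 t ** X2 t))
        (at t within {0..})"
      unfolding Xf_def[abs_def]
      by (intro block_deriv bounded_bilinear.has_vector_derivative[OF mm_bb] dH t conjunct1[OF X1] conjunct1[OF X2])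
    have "block_mat (B11 t ** X1 t) (H t ** (B22 t ** X2 t) + H' t ** X2 t) (B22 t ** X2 t)
        = block_mat (B11 t) (B12 t) (B22 t) ** Xf t"
      by (simp add: Xf_def H'_def block_eq_iff mm_add_left mm_diff_left matrix_mul_assoc)
    with d show "(Xf has_vector_derivative block_mat (B11 t) (B12 t) (B22 t) ** Xf t) (at t within {0..})"
      by simp
  next
    fix t t0 :: real assume h: "0 \<le> t0 \<and> t0 \<le> t"
    have e: "Xf t ** P ** matrix_inv (Xf t0) = block_mat 0 (H t ** (X2 t ** Y2 t0)) (X2 t ** Y2 t0)"
      unfolding miXf[of t0, OF conjunct1[OF h]] by (simp add: Xf_def Xi_def P_def matrix_mul_assoc)
    have E: "norm (X2 t ** Y2 t0) \<le> K2 * exp (- \<alpha>2 * (t - t0))"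
      using bd2[of t0 t] h by (simp add: Y2_def)
    have E': "K2 * exp (- \<alpha>2 * (t - t0)) \<le> max K1 K2 * exp (- \<alpha> * (t - t0))"
      using h K2 by (intro mult_mono) (auto simp: \<alpha>_def mult_right_mono)
    have "norm (Xf t ** P ** matrix_inv (Xf t0)) \<le> norm (0::real^'a^'a) + norm (H t ** (X2 t ** Y2 t0)) + norm (X2 t ** Y2 t0)"
      unfolding e by (rule block_norm_le)
    also have "\<dots> \<le> Hb * norm (X2 t ** Y2 t0) + norm (X2 t ** Y2 t0)"
      using mm_norm_le[of "H t" "X2 t ** Y2 t0"] Hbound[of t] h
      by (simp add: mult_right_mono order_trans)
    also have "\<dots> = (1 + Hb) * norm (X2 t ** Y2 t0)" by (simp add: algebra_simps)
    also have "\<dots> \<le> (1 + Hb) * (max K1 K2 * exp (- \<alpha> * (t - t0)))"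
      using E E' Hb0 by (intro mult_left_mono) auto
    finally show "norm (Xf t ** P ** matrix_inv (Xf t0)) \<le> K * exp (- \<alpha> * (t - t0))"
      by (simp add: K_def mult.assoc)
  next
    fix t t0 :: real assume h: "0 \<le> t \<and> t \<le> t0"
    have mP: "mat 1 - P = block_mat (mat 1) 0 0" by (simp add: P_def block_one)
    have e: "Xf t ** (mat 1 - P) ** matrix_inv (Xf t0) = block_mat (X1 t ** Y1 t0) (- ((X1 t ** Y1 t0) ** H t0)) 0"
      using h unfolding miXf[of t0, OF order_trans[OF conjunct1[OF h] conjunct2[OF h]]] mP
      by (simp add: Xf_def Xi_def mm_minus_right matrix_mul_assoc)
    have E: "norm (X1 t ** Y1 t0) \<le> K1 * exp (\<alpha>1 * (t - t0))"
      using bd1[of t t0] h by (simp add: Y1_def)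
    have E': "K1 * exp (\<alpha>1 * (t - t0)) \<le> max K1 K2 * exp (\<alpha> * (t - t0))"
    proof -
      have "\<alpha>1 * (t - t0) \<le> \<alpha> * (t - t0)"
        using h by (intro mult_right_mono_neg) (auto simp: \<alpha>_def)
      then show ?thesis using K1 by (intro mult_mono) auto
    qed
    have "norm (Xf t ** (mat 1 - P) ** matrix_inv (Xf t0)) \<le> norm (X1 t ** Y1 t0) + norm (- ((X1 t ** Y1 t0) ** H t0)) + norm (0::real^'b^'b)"
      unfolding e by (rule block_norm_le)
    also have "\<dots> \<le> norm (X1 t ** Y1 t0) + norm (X1 t ** Y1 t0) * Hb"
      using mm_norm_le[of "X1 t ** Y1 t0" "H t0"] Hbound[of t0] h
      by (simp add: mult_left_mono order_trans)
    also have "\<dots> = (1 + Hb) * norm (X1 t ** Y1 t0)" by (simp add: algebra_simps)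
    also have "\<dots> \<le> (1 + Hb) * (max K1 K2 * exp (\<alpha> * (t - t0)))"
      using E E' Hb0 by (intro mult_left_mono) auto
    finally show "norm (Xf t ** (mat 1 - P) ** matrix_inv (Xf t0)) \<le> K * exp (\<alpha> * (t - t0))"
      by (simp add: K_def mult.assoc)
  qed
  show ?thesis
    using dich lyap tc unfolding P_def by blast
qed

end
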